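(* Let $H$ be a complex Hilbert space and let $R \in \mathcal{L}(H)$ be an operator of finite rank. Then $I + R$ satisfies the property $\mathcal{AN}^*$.
   Context: $\mathcal{L}(H)$ is the space of bounded linear operators on $H$; $I$ is the identity. For a closed subspace $M \neq \{0\}$ of $H$ and $T \in \mathcal{L}(H)$, write $[T|_M] := \inf\{\|Tx\| : x \in M, \|x\|=1\}$; $T|_M$ satisfies $\mathcal{N}^*$ if there is $x_0 \in M$ with $\|x_0\|=1$ and $\|Tx_0\| = [T|_M]$. $T$ satisfies the property $\mathcal{AN}^*$ if $T|_M$ satisfies $\mathcal{N}^*$ for every closed subspace $M \neq \{0\}$ of $H$. *)

theory Defs
  imports "HOL-Analysis.Analysis"
begin

class complex_vector = real_vector +
  fixes scaleC :: "complex \<Rightarrow> 'a \<Rightarrow> 'a" (infixr \<open>*\<^sub>C\<close> 75)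
  assumes scaleC_add_right: "a *\<^sub>C (x + y) = a *\<^sub>C x + a *\<^sub>C y"
    and scaleC_add_left: "(a + b) *\<^sub>C x = a *\<^sub>C x + b *\<^sub>C x"
    and scaleC_scaleC: "a *\<^sub>C (b *\<^sub>C x) = (a * b) *\<^sub>C x"
    and scaleC_one: "1 *\<^sub>C x = x"
    and scaleR_scaleC: "r *\<^sub>R x = complex_of_real r *\<^sub>C x"

class complex_inner = complex_vector + real_normed_vector +
  fixes cinner :: "'a \<Rightarrow> 'a \<Rightarrow> complex"
  assumes cinner_commute: "cinner x y = cnj (cinner y x)"
    and cinner_add_left: "cinner (x + y) z = cinner x z + cinner y z"
    and cinner_scaleC_left: "cinner (a *\<^sub>C x) y = cnj a * cinner x y"
    and cinner_pos: "Im (cinner x x) = 0 \<and> 0 \<le> Re (cinner x x)"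
    and cinner_eq_zero_iff: "cinner x x = 0 \<longleftrightarrow> x = 0"
    and norm_eq_sqrt_cinner: "norm x = sqrt (Re (cinner x x))"

class chilbert_space = complex_inner + complete_space

definition clinear :: "('a::complex_vector \<Rightarrow> 'b::complex_vector) \<Rightarrow> bool" where
  "clinear T \<longleftrightarrow> (\<forall>x y. T (x + y) = T x + T y) \<and> (\<forall>c x. T (c *\<^sub>C x) = c *\<^sub>C T x)"

definition bounded_clinear :: "('a::complex_inner \<Rightarrow> 'b::complex_inner) \<Rightarrow> bool" where
  "bounded_clinear T \<longleftrightarrow> clinear T \<and> (\<exists>K. \<forall>x. norm (T x) \<le> norm x * K)"

definition cspan :: "'a::complex_vector set \<Rightarrow> 'a set" where
  "cspan S = {(\<Sum>x\<in>F. c x *\<^sub>C x) | F c. finite F \<and> F \<subseteq> S}"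

definition finite_rank :: "('a::complex_vector \<Rightarrow> 'b::complex_vector) \<Rightarrow> bool" where
  "finite_rank T \<longleftrightarrow> (\<exists>F. finite F \<and> range T \<subseteq> cspan F)"

definition csubspace :: "'a::complex_vector set \<Rightarrow> bool" where
  "csubspace M \<longleftrightarrow> 0 \<in> M \<and> (\<forall>x\<in>M. \<forall>y\<in>M. x + y \<in> M) \<and> (\<forall>c. \<forall>x\<in>M. c *\<^sub>C x \<in> M)"

definition min_mod :: "('a::complex_inner \<Rightarrow> 'a) \<Rightarrow> 'a set \<Rightarrow> real" where
  "min_mod T M = Inf {norm (T x) | x. x \<in> M \<and> norm x = 1}"

definition restr_attains_min :: "('a::complex_inner \<Rightarrow> 'a) \<Rightarrow> 'a set \<Rightarrow> bool" where
  "restr_attains_min T M \<longleftrightarrow> (\<exists>x0\<in>M. norm x0 = 1 \<and> norm (T x0) = min_mod T M)"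

definition AN_star :: "('a::complex_inner \<Rightarrow> 'a) \<Rightarrow> bool" where
  "AN_star T \<longleftrightarrow> (\<forall>M. csubspace M \<and> closed M \<and> M \<noteq> {0} \<longrightarrow> restr_attains_min T M)"

end

theory Submission
  imports Defs
begin

global_interpretation cvs: vector_space "scaleC :: complex \<Rightarrow> 'a \<Rightarrow> 'a::complex_vector"
  by unfold_locales (auto simp: scaleC_add_right scaleC_add_left scaleC_scaleC scaleC_one)

lemma cspan_eq: "cspan S = cvs.span S"
  unfolding cspan_def cvs.span_explicit by blast

lemma scaleC_real: "complex_of_real r *\<^sub>C x = r *\<^sub>R x"
  by (simp add: scaleR_scaleC)

lemma scaleC_zero_left[simp]: "0 *\<^sub>C (x::'a::complex_vector) = 0"
  by (rule cvs.scale_zero_left)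
lemma scaleC_zero_right[simp]: "a *\<^sub>C (0::'a::complex_vector) = 0"
  by (rule cvs.scale_zero_right)

lemma cinner_add_right: "cinner x (y + z) = cinner x y + cinner x z"
proof -
  have "cinner x (y+z) = cnj (cinner (y+z) x)" by (rule cinner_commute)
  also have "\<dots> = cnj (cinner y x) + cnj (cinner z x)" by (simp add: cinner_add_left)
  also have "\<dots> = cinner x y + cinner x z" by (simp only: cinner_commute[of x y] cinner_commute[of x z])
  finally show ?thesis .
qed
lemma cinner_scaleC_right: "cinner x (a *\<^sub>C y) = a * cinner x y"
proof -
  have "cinner x (a *\<^sub>C y) = cnj (cinner (a *\<^sub>C y) x)" by (rule cinner_commute)
  also have "\<dots> = a * cnj (cinner y x)" by (simp add: cinner_scaleC_left)
  also have "\<dots> = a * cinner x y" by (simp only: cinner_commute[of x y])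
  finally show ?thesis .
qed
lemma cinner_zero_left[simp]: "cinner 0 x = 0"
proof -
  have "cinner (0+0) x = cinner 0 x + cinner 0 x" by (rule cinner_add_left)
  then show ?thesis by simp
qed
lemma cinner_zero_right[simp]: "cinner x 0 = 0"
proof -
  have "cinner x (0+0) = cinner x 0 + cinner x 0" by (rule cinner_add_right)
  then show ?thesis by simp
qed
lemma cinner_minus_left: "cinner (- x) y = - cinner x y"
proof -
  have "cinner (-x) y + cinner x y = cinner (-x + x) y" by (rule cinner_add_left[symmetric])
  also have "\<dots> = 0" by simp
  finally have "cinner (-x) y + cinner x y = 0" .
  then show ?thesis by (rule eq_neg_iff_add_eq_0[THEN iffD2])
qed
lemma cinner_minus_right: "cinner x (- y) = - cinner x y"
proof -
  have "cinner x (-y) + cinner x y = cinner x (-y + y)" by (rule cinner_add_right[symmetric])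
  also have "\<dots> = 0" by simp
  finally have "cinner x (-y) + cinner x y = 0" .
  then show ?thesis by (rule eq_neg_iff_add_eq_0[THEN iffD2])
qed
lemma cinner_diff_left: "cinner (x - y) z = cinner x z - cinner y z"
  by (simp only: diff_conv_add_uminus cinner_add_left cinner_minus_left)
lemma cinner_diff_right: "cinner x (y - z) = cinner x y - cinner x z"
  by (simp only: diff_conv_add_uminus cinner_add_right cinner_minus_right)
lemma cinner_sum_right: "cinner x (\<Sum>i\<in>A. f i) = (\<Sum>i\<in>A. cinner x (f i))"
  by (induct A rule: infinite_finite_induct) (auto simp: cinner_add_right)
lemma cinner_sum_left: "cinner (\<Sum>i\<in>A. f i) x = (\<Sum>i\<in>A. cinner (f i) x)"
  by (induct A rule: infinite_finite_induct) (auto simp: cinner_add_left)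

lemma cinner_self: "cinner x x = complex_of_real ((norm x)\<^sup>2)"
proof -
  have "Im (cinner x x) = 0" "0 \<le> Re (cinner x x)" using cinner_pos by auto
  then show ?thesis by (simp add: norm_eq_sqrt_cinner complex_eq_iff)
qed

lemma norm_sq_cinner: "(norm x)\<^sup>2 = Re (cinner x x)"
  by (simp add: cinner_self)

lemma norm_add_sq: "(norm (x + y))\<^sup>2 = (norm x)\<^sup>2 + (norm y)\<^sup>2 + 2 * Re (cinner x y)"
proof -
  have "cinner (x+y) (x+y) = cinner x x + cinner y y + (cinner x y + cinner y x)"
    by (simp add: cinner_add_left cinner_add_right)
  moreover have "Re (cinner x y + cinner y x) = 2 * Re (cinner x y)"
    by (subst cinner_commute[of y x]) simp
  ultimately show ?thesis by (simp add: norm_sq_cinner)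
qed

lemma pythag: "cinner x y = 0 \<Longrightarrow> (norm (x + y))\<^sup>2 = (norm x)\<^sup>2 + (norm y)\<^sup>2"
  by (simp add: norm_add_sq)

lemma norm_scaleC: "norm (a *\<^sub>C (x::'a::complex_inner)) = cmod a * norm x"
proof -
  have "(norm (a *\<^sub>C x))\<^sup>2 = Re (a * (cnj a * cinner x x))"
    unfolding norm_sq_cinner cinner_scaleC_left cinner_scaleC_right ..
  also have "a * (cnj a * cinner x x) = complex_of_real ((cmod a)\<^sup>2 * (norm x)\<^sup>2)"
  proof -
    have "a * cnj a = complex_of_real ((cmod a)\<^sup>2)" using complex_norm_square[of a] by simp
    then show ?thesis unfolding cinner_self by (simp add: mult.assoc[symmetric])
  qed
  finally have "(norm (a *\<^sub>C x))\<^sup>2 = (cmod a * norm x)\<^sup>2"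
    by (simp add: power_mult_distrib)
  then show ?thesis by (rule power2_eq_imp_eq) auto
qed



lemma scaleC_minus_left: "(- a) *\<^sub>C (x::'a::complex_vector) = - (a *\<^sub>C x)"
  by (rule cvs.scale_minus_left)

lemma csubspace_iff: "csubspace M \<longleftrightarrow> cvs.subspace M"
  by (auto simp: csubspace_def cvs.subspace_def)

lemma Re_mult_cnj: "Re (c * cnj c) = (cmod c)\<^sup>2"
  by (simp add: complex_mult_cnj cmod_power2)

lemma proj_one:
  fixes n w :: "'a::complex_inner"
  assumes "n \<noteq> 0"
  shows "(norm (w - (cinner n w / cinner n n) *\<^sub>C n))\<^sup>2 = (norm w)\<^sup>2 - (cmod (cinner n w))\<^sup>2 / (norm n)\<^sup>2"
proof -
  define c where "c = cinner n w"
  define t where "t = c / cinner n n"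
  have nn: "cinner n n = complex_of_real ((norm n)\<^sup>2)" by (rule cinner_self)
  have np: "(norm n)\<^sup>2 > 0" using assms by simp
  have e: "w - t *\<^sub>C n = w + (-t) *\<^sub>C n" by (simp add: scaleC_minus_left)
  have "(norm (w - t *\<^sub>C n))\<^sup>2 = (norm w)\<^sup>2 + (norm ((-t) *\<^sub>C n))\<^sup>2 + 2 * Re (cinner w ((-t) *\<^sub>C n))"
    unfolding e by (rule norm_add_sq)
  moreover have "cmod t = cmod c / (norm n)\<^sup>2"
    by (simp add: t_def nn norm_divide norm_power)
  then have "(norm ((-t) *\<^sub>C n))\<^sup>2 = (cmod c)\<^sup>2 / (norm n)\<^sup>2"
    using np by (simp add: norm_scaleC power_mult_distrib power_divide power2_eq_square)
  moreover have "cinner w ((-t) *\<^sub>C n) = - (t * cnj c)"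
    by (simp add: scaleC_minus_left cinner_minus_right cinner_scaleC_right c_def cinner_commute[of w n])
  moreover have "Re (t * cnj c) = (cmod c)\<^sup>2 / (norm n)\<^sup>2"
  proof -
    have "t * cnj c = (c * cnj c) / complex_of_real ((norm n)\<^sup>2)" by (simp add: t_def nn)
    then show ?thesis by (simp only: Re_divide_of_real Re_mult_cnj)
  qed
  ultimately show ?thesis by (simp add: t_def c_def)
qed

lemma cauchy_schwarz: "cmod (cinner x y) \<le> norm x * norm (y::'a::complex_inner)"
proof (cases "x = 0")
  case True then show ?thesis by simp
next
  case False
  have "0 \<le> (norm (y - (cinner x y / cinner x x) *\<^sub>C x))\<^sup>2" by simp
  then have "(cmod (cinner x y))\<^sup>2 / (norm x)\<^sup>2 \<le> (norm y)\<^sup>2" using proj_one[OF False, of y] by simp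
  then have "(cmod (cinner x y))\<^sup>2 \<le> (norm x * norm y)\<^sup>2"
    using False by (simp add: pos_divide_le_eq power_mult_distrib mult.commute)
  then show ?thesis by (rule power2_le_imp_le) simp
qed

lemma bounded_linear_cinner: "bounded_linear (\<lambda>x. cinner a (x::'a::complex_inner))"
proof (rule bounded_linear_intro[where K="norm a"])
  fix x y show "cinner a (x + y) = cinner a x + cinner a y" by (rule cinner_add_right)
next
  fix r x show "cinner a (r *\<^sub>R x) = r *\<^sub>R cinner a x"
    by (simp add: scaleR_scaleC cinner_scaleC_right scaleR_conv_of_real)
next
  fix x show "norm (cinner a x) \<le> norm x * norm a"
    using cauchy_schwarz[of a x] by (simp add: mult.commute)
qed

lemma continuous_cinner: "continuous_on UNIV (\<lambda>x. cinner a (x::'a::complex_inner))"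
  by (rule linear_continuous_on[OF bounded_linear_cinner])

lemma closed_orth: "closed {x::'a::complex_inner. \<forall>a\<in>A. cinner a x = 0}"
proof -
  have "{x::'a. \<forall>a\<in>A. cinner a x = 0} = (\<Inter>a\<in>A. {x. cinner a x = 0})" by auto
  moreover have "closed {x::'a. cinner a x = 0}" for a
    using closed_Collect_eq[OF continuous_cinner continuous_on_const] .
  ultimately show ?thesis by auto
qed

lemma bounded_clinear_linear: "bounded_clinear R \<Longrightarrow> bounded_linear R"
  unfolding bounded_clinear_def clinear_def
  by (auto intro!: bounded_linear_intro simp: scaleR_scaleC)

lemma bounded_clinear_cont: "bounded_clinear R \<Longrightarrow> continuous_on UNIV R"
  by (rule linear_continuous_on[OF bounded_clinear_linear])

lemma clinear_linear: "clinear R \<Longrightarrow> Vector_Spaces.linear (*\<^sub>C) (*\<^sub>C) R"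
  unfolding clinear_def
  by (intro Vector_Spaces.linear.intro cvs.vector_space_axioms module_hom.intro module_hom_axioms.intro
        cvs.module_axioms) auto

lemma parallelogram: "(norm (a - b))\<^sup>2 + (norm (a + b))\<^sup>2 = 2 * (norm a)\<^sup>2 + 2 * (norm (b::'a::complex_inner))\<^sup>2"
proof -
  have "(norm (a + (-b)))\<^sup>2 = (norm a)\<^sup>2 + (norm (-b))\<^sup>2 + 2 * Re (cinner a (-b))" by (rule norm_add_sq)
  then have "(norm (a - b))\<^sup>2 = (norm a)\<^sup>2 + (norm b)\<^sup>2 - 2 * Re (cinner a b)" by (simp add: cinner_minus_right)
  moreover have "(norm (a + b))\<^sup>2 = (norm a)\<^sup>2 + (norm b)\<^sup>2 + 2 * Re (cinner a b)" by (rule norm_add_sq)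
  ultimately show ?thesis by simp
qed

lemma csubspace_scaleR: "csubspace N \<Longrightarrow> a \<in> N \<Longrightarrow> r *\<^sub>R a \<in> N"
  unfolding csubspace_def by (metis scaleC_real)

lemma csubspace_add: "csubspace N \<Longrightarrow> a \<in> N \<Longrightarrow> b \<in> N \<Longrightarrow> a + b \<in> N"
  unfolding csubspace_def by blast

lemma csubspace_scaleC: "csubspace N \<Longrightarrow> a \<in> N \<Longrightarrow> c *\<^sub>C a \<in> N"
  unfolding csubspace_def by blast

lemma csubspace_diff: "csubspace N \<Longrightarrow> a \<in> N \<Longrightarrow> b \<in> N \<Longrightarrow> a - b \<in> N"
  unfolding csubspace_iff by (rule cvs.subspace_diff)

lemma csubspace_0: "csubspace N \<Longrightarrow> 0 \<in> N"
  unfolding csubspace_def by blast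

lemma proj_exists:
  fixes N :: "'a::chilbert_space set"
  assumes sub: "csubspace N" and cl: "closed N"
  shows "\<exists>p\<in>N. \<forall>n\<in>N. cinner n (x - p) = 0"
proof -
  define D where "D = {(norm (x - n))\<^sup>2 | n. n \<in> N}"
  define d where "d = Inf D"
  have Dne: "D \<noteq> {}" using csubspace_0[OF sub] by (auto simp: D_def)
  have Dbdd: "bdd_below D" by (auto simp: D_def intro!: bdd_belowI[where m=0])
  have dle: "d \<le> (norm (x - n))\<^sup>2" if "n \<in> N" for n
    unfolding d_def using Dbdd that by (auto simp: D_def intro!: cInf_lower)
  have "\<exists>n\<in>N. (norm (x - n))\<^sup>2 < d + 1/(real k + 1)" for k
  proof -
    have "Inf D < d + 1/(real k+1)" by (simp add: d_def)
    then obtain y where "y \<in> D" "y < d + 1/(real k+1)" using cInf_lessD[OF Dne] by blast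
    then show ?thesis by (auto simp: D_def)
  qed
  then obtain s where sN: "\<And>k. s k \<in> N" and sd: "\<And>k. (norm (x - s k))\<^sup>2 < d + 1/(real k + 1)"
    by metis
  have key: "(norm (s j - s k))\<^sup>2 \<le> 2/(real j + 1) + 2/(real k + 1)" for j k
  proof -
    define mm where "mm = (1/2) *\<^sub>R (s k + s j)"
    have e1: "(x - s k) - (x - s j) = s j - s k" by simp
    have e2: "(x - s k) + (x - s j) = 2 *\<^sub>R (x - mm)"
      unfolding mm_def by (simp add: algebra_simps scaleR_2)
    have P: "(norm (s j - s k))\<^sup>2 + (norm (2 *\<^sub>R (x - mm)))\<^sup>2 = 2 * (norm (x - s k))\<^sup>2 + 2*(norm (x - s j))\<^sup>2"
      using parallelogram[of "x - s k" "x - s j"] unfolding e1 e2 .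
    have "(norm (2 *\<^sub>R (x - mm)))\<^sup>2 = 4 * (norm (x - mm))\<^sup>2"
      by (simp add: power_mult_distrib)
    moreover have "d \<le> (norm (x - mm))\<^sup>2"
      unfolding mm_def by (rule dle) (intro csubspace_scaleR[OF sub] csubspace_add[OF sub] sN)
    moreover note P
    ultimately show ?thesis using sd[of j] sd[of k] by linarith
  qed
  have "Cauchy s"
  proof (rule metric_CauchyI)
    fix e :: real assume e: "e > 0"
    obtain M :: nat where M: "4 / e\<^sup>2 < real M" using reals_Archimedean2 by blast
    have e2: "e\<^sup>2 > 0" using e by simp
    have "4 < real M * e\<^sup>2" using M by (simp add: pos_divide_less_eq[OF e2])
    moreover have "(real M + 1) * e\<^sup>2 = real M * e\<^sup>2 + e\<^sup>2" by (simp add: ring_distribs)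
    ultimately have h4: "4 < (real M + 1) * e\<^sup>2" using e2 by linarith
    have pos: "0 < real M + 1" by simp
    have M4: "4 / (real M + 1) < e\<^sup>2" using pos_divide_less_eq[OF pos, of 4 "e\<^sup>2"] h4 by (simp add: mult.commute)
    show "\<exists>M. \<forall>m\<ge>M. \<forall>n\<ge>M. dist (s m) (s n) < e"
    proof (intro exI allI impI)
      fix m n assume mn: "m \<ge> M" "n \<ge> M"
      have "2/(real m + 1) \<le> 2/(real M + 1)" using mn by (intro divide_left_mono) auto
      moreover have "2/(real n + 1) \<le> 2/(real M + 1)" using mn by (intro divide_left_mono) auto
      ultimately have "(norm (s m - s n))\<^sup>2 < e\<^sup>2" using key[of m n] M4 by linarith
      then have "norm (s m - s n) < e" by (rule power2_less_imp_less) (rule less_imp_le[OF e])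
      then show "dist (s m) (s n) < e" by (simp add: dist_norm)
    qed
  qed
  then obtain p where lim: "s \<longlonglongrightarrow> p" using Cauchy_convergent_iff convergent_def by blast
  have pN: "p \<in> N" using closed_sequentially[OF cl sN lim] .
  have pd: "(norm (x - p))\<^sup>2 \<le> d"
  proof -
    have "(\<lambda>k. (norm (x - s k))\<^sup>2) \<longlonglongrightarrow> (norm (x - p))\<^sup>2" by (intro tendsto_intros lim)
    moreover have "(\<lambda>k. d + inverse (real (Suc k))) \<longlonglongrightarrow> d + 0"
      by (intro tendsto_intros LIMSEQ_inverse_real_of_nat)
    moreover have "\<forall>k. (norm (x - s k))\<^sup>2 \<le> d + inverse (real (Suc k))"
      using sd by (simp add: less_imp_le inverse_eq_divide add.commute)
    ultimately show ?thesis by (intro LIMSEQ_le) auto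
  qed
  have pmin: "(norm (x - p))\<^sup>2 \<le> (norm (x - n))\<^sup>2" if "n \<in> N" for n
    using pd dle[OF that] by linarith
  show ?thesis
  proof (intro bexI[OF _ pN] ballI)
    fix n assume nN: "n \<in> N"
    show "cinner n (x - p) = 0"
    proof (cases "n = 0")
      case True then show ?thesis by simp
    next
      case False
      define t where "t = cinner n (x-p) / cinner n n"
      have "p + t *\<^sub>C n \<in> N" using pN nN by (intro csubspace_add[OF sub] csubspace_scaleC[OF sub])
      then have "(norm (x - p))\<^sup>2 \<le> (norm (x - (p + t *\<^sub>C n)))\<^sup>2" by (rule pmin)
      also have "x - (p + t *\<^sub>C n) = (x - p) - t *\<^sub>C n" by simp
      also have "(norm ((x - p) - t *\<^sub>C n))\<^sup>2 = (norm (x-p))\<^sup>2 - (cmod (cinner n (x-p)))\<^sup>2/(norm n)\<^sup>2"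
        unfolding t_def by (rule proj_one[OF False])
      finally have "(cmod (cinner n (x-p)))\<^sup>2/(norm n)\<^sup>2 \<le> 0" by simp
      then have "(cmod (cinner n (x-p)))\<^sup>2 \<le> 0" using False by (simp add: divide_le_0_iff)
      then show ?thesis by simp
    qed
  qed
qed


definition orthonormal :: "'a::complex_inner set \<Rightarrow> bool" where
  "orthonormal E \<longleftrightarrow> (\<forall>e\<in>E. cinner e e = 1) \<and> (\<forall>e\<in>E. \<forall>f\<in>E. e \<noteq> f \<longrightarrow> cinner e f = 0)"

lemma ortho_coeff:
  assumes "orthonormal E" "finite E" "e \<in> E"
  shows "cinner e (\<Sum>f\<in>E. c f *\<^sub>C f) = c e"
proof -
  have "cinner e (\<Sum>f\<in>E. c f *\<^sub>C f) = (\<Sum>f\<in>E. c f * cinner e f)"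
    by (simp add: cinner_sum_right cinner_scaleC_right)
  also have "\<dots> = (\<Sum>f\<in>E. if f = e then c e else 0)"
    by (rule sum.cong) (use assms in \<open>auto simp: orthonormal_def\<close>)
  also have "\<dots> = c e" using assms by (simp add: sum.delta')
  finally show ?thesis .
qed

lemma ortho_expand:
  assumes "orthonormal E" "finite E" "y \<in> cvs.span E"
  shows "y = (\<Sum>e\<in>E. cinner e y *\<^sub>C e)"
proof -
  obtain c where y: "y = (\<Sum>f\<in>E. c f *\<^sub>C f)" using assms(3) cvs.span_finite[OF assms(2)] by auto
  have "(\<Sum>e\<in>E. cinner e (\<Sum>f\<in>E. c f *\<^sub>C f) *\<^sub>C e) = (\<Sum>e\<in>E. c e *\<^sub>C e)"
    by (rule sum.cong) (simp_all add: ortho_coeff[OF assms(1,2)])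
  then show ?thesis unfolding y by simp
qed

lemma gram_schmidt:
  fixes B :: "'a::complex_inner set"
  assumes "finite B"
  shows "\<exists>E. finite E \<and> orthonormal E \<and> B \<subseteq> cvs.span E"
  using assms
proof (induction B rule: finite_induct)
  case empty then show ?case by (intro exI[of _ "{}"]) (auto simp: orthonormal_def)
next
  case (insert b B)
  then obtain E where E: "finite E" "orthonormal E" "B \<subseteq> cvs.span E" by blast
  define w where "w = b - (\<Sum>e\<in>E. cinner e b *\<^sub>C e)"
  have wE: "cinner e w = 0" if "e \<in> E" for e
    using ortho_coeff[OF E(2) E(1) that, of "\<lambda>e. cinner e b"] by (simp add: w_def cinner_diff_right)
  have bw: "b = w + (\<Sum>e\<in>E. cinner e b *\<^sub>C e)" by (simp add: w_def)
  have sumspan: "(\<Sum>e\<in>E. cinner e b *\<^sub>C e) \<in> cvs.span E"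
    by (intro cvs.span_sum cvs.span_scale cvs.span_base)
  show ?case
  proof (cases "w = 0")
    case True
    then have "b \<in> cvs.span E" using bw sumspan by simp
    then show ?thesis using E by blast
  next
    case False
    define u where "u = (1 / complex_of_real (norm w)) *\<^sub>C w"
    have nw: "norm w > 0" using False by simp
    have cw: "cinner w w = complex_of_real ((norm w)\<^sup>2)" by (rule cinner_self)
    have c1: "cnj (1/complex_of_real (norm w)) = 1/complex_of_real (norm w)" by simp
    have "cinner u u = (1/complex_of_real (norm w)) * ((1/complex_of_real (norm w)) * complex_of_real ((norm w)\<^sup>2))"
      unfolding u_def cinner_scaleC_left cinner_scaleC_right cw c1 ..
    also have "\<dots> = 1" using nw by (simp add: power2_eq_square)
    finally have uu: "cinner u u = 1" .
    have uE: "cinner e u = 0" if "e \<in> E" for e using wE[OF that] by (simp add: u_def cinner_scaleC_right)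
    have uE': "cinner u e = 0" if "e \<in> E" for e using uE[OF that] cinner_commute[of u e] by simp
    have unotin: "u \<notin> E" using uE uu by force
    have orth: "orthonormal (insert u E)" using E(2) uu uE uE' unotin unfolding orthonormal_def by auto
    have sub: "cvs.span E \<subseteq> cvs.span (insert u E)" by (rule cvs.span_mono) blast
    have "w = complex_of_real (norm w) *\<^sub>C u" using nw by (simp add: u_def scaleC_scaleC scaleC_one)
    then have wspan: "w \<in> cvs.span (insert u E)"
      using cvs.span_scale[OF cvs.span_base[OF insertI1[of u E]], of "complex_of_real (norm w)"] by simp
    have "b \<in> cvs.span (insert u E)" using bw cvs.span_add[OF wspan subsetD[OF sub sumspan]] by simp
    moreover have "B \<subseteq> cvs.span (insert u E)" using E(3) sub by blast
    ultimately show ?thesis using E(1) orth by (intro exI[of _ "insert u E"]) auto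
  qed
qed

lemma bounded_subseq_coords:
  fixes y :: "nat \<Rightarrow> 'a::complex_inner"
  assumes "finite E" and bnd: "\<And>n. norm (y n) \<le> C"
  shows "\<exists>r. strict_mono r \<and> (\<forall>e\<in>E. convergent (\<lambda>n. cinner e (y (r n))))"
  using assms(1)
proof (induction E rule: finite_induct)
  case empty then show ?case by (intro exI[of _ id]) (auto simp: strict_mono_def)
next
  case (insert a E)
  then obtain r where r: "strict_mono r" "\<forall>e\<in>E. convergent (\<lambda>n. cinner e (y (r n)))" by blast
  have "norm (cinner a (y (r n))) \<le> norm a * C" for n
  proof -
    have "norm (cinner a (y (r n))) \<le> norm a * norm (y (r n))" by (rule cauchy_schwarz)
    also have "\<dots> \<le> norm a * C" by (rule mult_left_mono[OF bnd]) simp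
    finally show ?thesis .
  qed
  then have "bounded (range (\<lambda>n. cinner a (y (r n))))"
    unfolding bounded_iff by blast
  then obtain l s where s: "strict_mono s" "((\<lambda>n. cinner a (y (r n))) \<circ> s) \<longlonglongrightarrow> l"
    using bounded_imp_convergent_subsequence by blast
  have "strict_mono (r \<circ> s)" using r(1) s(1) by (rule strict_mono_o)
  moreover have "\<forall>e\<in>insert a E. convergent (\<lambda>n. cinner e (y ((r \<circ> s) n)))"
  proof
    fix e assume "e \<in> insert a E"
    then consider "e = a" | "e \<in> E" by auto
    then show "convergent (\<lambda>n. cinner e (y ((r \<circ> s) n)))"
    proof cases
      case 1 then show ?thesis using s(2) by (auto simp: convergent_def o_def)
    next
      case 2
      then obtain L where "(\<lambda>n. cinner e (y (r n))) \<longlonglongrightarrow> L" using r(2) by (auto simp: convergent_def)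
      from LIMSEQ_subseq_LIMSEQ[OF this s(1)] show ?thesis by (auto simp: convergent_def o_def)
    qed
  qed
  ultimately show ?case by blast
qed

lemma bl_scaleC_left: "bounded_linear (\<lambda>c::complex. c *\<^sub>C (e::'a::complex_inner))"
proof (rule bounded_linear_intro[where K="norm e"])
  fix x y :: complex show "(x + y) *\<^sub>C e = x *\<^sub>C e + y *\<^sub>C e" by (rule scaleC_add_left)
next
  fix r :: real and x :: complex show "(r *\<^sub>R x) *\<^sub>C e = r *\<^sub>R (x *\<^sub>C e)"
    by (simp add: scaleR_scaleC scaleC_scaleC scaleR_conv_of_real)
next
  fix x :: complex show "norm (x *\<^sub>C e) \<le> norm x * norm e" by (simp add: norm_scaleC)
qed

lemma min_on_sphere:
  fixes V :: "'a::chilbert_space set" and f :: "'a \<Rightarrow> real"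
  assumes E: "finite E" "orthonormal E" and VE: "V \<subseteq> cvs.span E" and cl: "closed V"
    and ne: "\<exists>v\<in>V. norm v = 1" and cont: "continuous_on UNIV f"
  shows "\<exists>y\<in>V. norm y = 1 \<and> (\<forall>z\<in>V. norm z = 1 \<longrightarrow> f y \<le> f z)"
proof -
  define S where "S = {v\<in>V. norm v = 1}"
  have "compact S"
    unfolding compact_eq_seq_compact_metric seq_compact_def
  proof (intro allI impI)
    fix y :: "nat \<Rightarrow> 'a" assume yS: "\<forall>n. y n \<in> S"
    then have bnd: "\<And>n. norm (y n) \<le> 1" by (auto simp: S_def)
    obtain r where r: "strict_mono r" "\<forall>e\<in>E. convergent (\<lambda>n. cinner e (y (r n)))"
      using bounded_subseq_coords[where y=y and C=1, OF E(1) bnd] by blast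
    define L where "L e = lim (\<lambda>n. cinner e (y (r n)))" for e
    have Lc: "(\<lambda>n. cinner e (y (r n))) \<longlonglongrightarrow> L e" if "e \<in> E" for e
      using r(2) that by (simp add: L_def convergent_LIMSEQ_iff)
    define l where "l = (\<Sum>e\<in>E. L e *\<^sub>C e)"
    have yexp: "y (r n) = (\<Sum>e\<in>E. cinner e (y (r n)) *\<^sub>C e)" for n
      using VE yS by (intro ortho_expand[OF E(2) E(1)]) (auto simp: S_def)
    have T1: "(\<lambda>n. \<Sum>e\<in>E. cinner e (y (r n)) *\<^sub>C e) \<longlonglongrightarrow> l"
      unfolding l_def
    proof (rule tendsto_sum)
      fix e assume "e \<in> E"
      show "(\<lambda>n. cinner e (y (r n)) *\<^sub>C e) \<longlonglongrightarrow> L e *\<^sub>C e"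
        using bounded_linear.tendsto[OF bl_scaleC_left Lc[OF \<open>e\<in>E\<close>]] .
    qed
    have eqf: "(y \<circ> r) = (\<lambda>n. \<Sum>e\<in>E. cinner e (y (r n)) *\<^sub>C e)"
    proof
      fix n show "(y \<circ> r) n = (\<Sum>e\<in>E. cinner e (y (r n)) *\<^sub>C e)" unfolding o_def by (rule yexp)
    qed
    have lim: "(y \<circ> r) \<longlonglongrightarrow> l" unfolding eqf by (rule T1)
    have "l \<in> V" using closed_sequentially[OF cl _ lim] yS by (auto simp: S_def)
    moreover have "norm l = 1"
    proof -
      have "(\<lambda>n. norm ((y \<circ> r) n)) \<longlonglongrightarrow> norm l" by (rule tendsto_norm[OF lim])
      moreover have "(\<lambda>n. norm ((y \<circ> r) n)) = (\<lambda>n. 1)" using yS by (auto simp: S_def)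
      ultimately have "(\<lambda>n. 1::real) \<longlonglongrightarrow> norm l" by simp
      from LIMSEQ_unique[OF tendsto_const this] show ?thesis by simp
    qed
    ultimately show "\<exists>l\<in>S. \<exists>r. strict_mono r \<and> (y \<circ> r) \<longlonglongrightarrow> l" using r(1) lim by (auto simp: S_def)
  qed
  moreover have "S \<noteq> {}" using ne by (auto simp: S_def)
  moreover have "continuous_on S f" by (rule continuous_on_subset[OF cont]) simp
  ultimately obtain yy where "yy \<in> S" "\<forall>z\<in>S. f yy \<le> f z" using continuous_attains_inf by blast
  then show ?thesis by (auto simp: S_def)
qed


lemma clinear_add: "clinear L \<Longrightarrow> L (x + y) = L x + L y"
  unfolding clinear_def by blast

lemma clinear_scaleC: "clinear L \<Longrightarrow> L (c *\<^sub>C x) = c *\<^sub>C L x"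
  unfolding clinear_def by blast

lemma clinear_diff: "clinear L \<Longrightarrow> L (x - y) = L x - L (y::'a::complex_vector)"
  using Vector_Spaces.linear.axioms(3)[OF clinear_linear] module_hom.diff by blast

lemma clinear_zero: "clinear L \<Longrightarrow> L (0::'a::complex_vector) = 0"
  using clinear_diff[of L 0 0] by simp

lemma clinear_scaleR: "clinear L \<Longrightarrow> L (r *\<^sub>R x) = r *\<^sub>R L x"
  by (simp add: scaleR_scaleC clinear_scaleC)

lemma orth_span:
  assumes "finite E" "orthonormal E" "\<forall>e\<in>E. cinner e x0 = 0" "z \<in> cvs.span E"
  shows "cinner x0 z = 0"
proof -
  have ze: "z = (\<Sum>e\<in>E. cinner e z *\<^sub>C e)" by (rule ortho_expand[OF assms(2,1,4)])
  have "cinner x0 z = cinner x0 (\<Sum>e\<in>E. cinner e z *\<^sub>C e)" by (rule arg_cong[where f="cinner x0", OF ze])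
  also have "\<dots> = (\<Sum>e\<in>E. cinner e z * cinner x0 e)"
    by (simp only: cinner_sum_right cinner_scaleC_right)
  also have "\<dots> = 0"
  proof (rule sum.neutral, rule ballI)
    fix e assume "e \<in> E"
    then have "cinner x0 e = 0" using assms(3) cinner_commute[of x0 e] by simp
    then show "cinner e z * cinner x0 e = 0" by simp
  qed
  finally show ?thesis .
qed

lemma decomp_norms:
  assumes lin: "clinear R" and RE: "\<And>y. R y \<in> cvs.span E0" and E0: "finite E0" "orthonormal E0"
    and x0: "R x0 = 0" "\<forall>e\<in>E0. cinner e x0 = 0" and ortho: "cinner x0 x1 = 0"
  shows "(norm ((x0 + x1) + R (x0 + x1)))\<^sup>2 = (norm x0)\<^sup>2 + (norm (x1 + R x1))\<^sup>2"
proof -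
  have "R (x0 + x1) = R x1" using clinear_add[OF lin] x0(1) by simp
  then have e: "(x0 + x1) + R (x0 + x1) = x0 + (x1 + R x1)" by (simp add: add.assoc)
  have "cinner x0 (R x1) = 0" by (rule orth_span[OF E0 x0(2) RE])
  then have "cinner x0 (x1 + R x1) = 0" using ortho by (simp add: cinner_add_right)
  then show ?thesis unfolding e by (rule pythag)
qed

lemma fin_dim_inj:
  fixes W :: "'a::complex_vector set" and L :: "'a \<Rightarrow> 'a"
  assumes sub: "cvs.subspace W" and lin: "clinear L" and inj: "\<And>y. y \<in> W \<Longrightarrow> L y = 0 \<Longrightarrow> y = 0"
    and G: "finite G" and img: "\<And>y. y \<in> W \<Longrightarrow> L y \<in> cvs.span G"
  shows "\<exists>B. finite B \<and> W \<subseteq> cvs.span B"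
proof (rule ccontr)
  assume nf: "\<not> (\<exists>B. finite B \<and> W \<subseteq> cvs.span B)"
  have indep_bound: "finite B \<and> card B \<le> card G" if BW: "B \<subseteq> W" and Bi: "cvs.independent B" for B
  proof -
    have l: "module_hom (*\<^sub>C) (*\<^sub>C) L" using clinear_linear[OF lin] by (simp add: module_hom_iff_linear)
    have spW: "cvs.span B \<subseteq> W" by (rule cvs.span_minimal[OF BW sub])
    have injL: "inj_on L (cvs.span B)"
    proof (rule inj_onI)
      fix a b assume ab: "a \<in> cvs.span B" "b \<in> cvs.span B" "L a = L b"
      then have "a - b \<in> W" using spW cvs.subspace_diff[OF sub] by blast
      moreover have "L (a - b) = 0" using ab(3) clinear_diff[OF lin] by simp
      ultimately have "a - b = 0" by (rule inj)
      then show "a = b" by simp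
    qed
    have "cvs.independent (L ` B)"
      by (rule module_hom.independent_injective_image[OF l Bi injL])
    moreover have "L ` B \<subseteq> cvs.span G" using img BW by auto
    ultimately have fc: "finite (L ` B) \<and> card (L ` B) \<le> card G"
      using cvs.independent_span_bound[OF G] by blast
    have iB: "inj_on L B" using injL cvs.span_superset by (rule inj_on_subset)
    have "finite B" using finite_imageD[OF conjunct1[OF fc] iB] .
    moreover have "card B = card (L ` B)" using card_image[OF iB] by simp
    ultimately show ?thesis using fc by simp
  qed
  have "\<exists>B. B \<subseteq> W \<and> cvs.independent B \<and> finite B \<and> card B = n" for n
  proof (induction n)
    case 0 show ?case by (intro exI[of _ "{}"]) (simp add: cvs.independent_empty)
  next
    case (Suc n)
    then obtain B where B: "B \<subseteq> W" "cvs.independent B" "finite B" "card B = n" by blast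
    from nf B(3) obtain a where a: "a \<in> W" "a \<notin> cvs.span B" by blast
    then have "cvs.independent (insert a B)" using cvs.independent_insertI B(2) by blast
    moreover have "a \<notin> B" using a(2) cvs.span_superset by blast
    ultimately show ?case using a(1) B by (intro exI[of _ "insert a B"]) auto
  qed
  then obtain B where B: "B \<subseteq> W" "cvs.independent B" "finite B" "card B = Suc (card G)" by blast
  have "card B \<le> card G" using indep_bound[OF B(1,2)] by simp
  then show False using B(4) by simp
qed


lemma csubspace_orth: "csubspace {x::'a::complex_inner. \<forall>a\<in>A. cinner a x = 0}"
  unfolding csubspace_def by (auto simp: cinner_add_right cinner_scaleC_right)

lemma csubspace_inter: "csubspace A \<Longrightarrow> csubspace B \<Longrightarrow> csubspace (A \<inter> B)"
  unfolding csubspace_def by auto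

lemma csubspace_kernel: "clinear R \<Longrightarrow> csubspace {x::'a::complex_vector. R x = 0}"
  unfolding csubspace_def using clinear_add[of R] clinear_scaleC[of R] clinear_zero[of R] by auto

lemma T_scale:
  assumes "clinear R"
  shows "norm ((r *\<^sub>R z) + R (r *\<^sub>R z)) = \<bar>r\<bar> * norm (z + R (z::'a::complex_inner))"
proof -
  have "(r *\<^sub>R z) + R (r *\<^sub>R z) = r *\<^sub>R (z + R z)"
    using clinear_scaleR[OF assms] by (simp add: scaleR_right_distrib)
  then show ?thesis by simp
qed

lemma normalize_in:
  assumes "csubspace N" "z \<in> N" "z \<noteq> 0"
  shows "(1 / norm z) *\<^sub>R z \<in> N" "norm ((1 / norm z) *\<^sub>R z) = 1"
  using csubspace_scaleR[OF assms(1,2)] assms(3) by auto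


theorem lemma3p8:
  fixes R :: "'a::chilbert_space \<Rightarrow> 'a"
  assumes "bounded_clinear R"
    and "finite_rank R"
  shows "AN_star (\<lambda>x. x + R x)"
  unfolding AN_star_def
proof (intro allI impI)
  fix M :: "'a set" assume "csubspace M \<and> closed M \<and> M \<noteq> {0}"
  then have Msub: "csubspace M" and Mcl: "closed M" and Mne: "M \<noteq> {0}" by auto
  have lin: "clinear R" using assms(1) unfolding bounded_clinear_def by blast
  have Rcont: "continuous_on UNIV R" by (rule bounded_clinear_cont[OF assms(1)])
  obtain F where F: "finite F" "range R \<subseteq> cspan F" using assms(2) unfolding finite_rank_def by blast
  obtain E0 where E0: "finite E0" "orthonormal E0" "F \<subseteq> cvs.span E0" using gram_schmidt[OF F(1)] by blast
  have RE: "R y \<in> cvs.span E0" for y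
  proof -
    have "R y \<in> cvs.span F" using F(2) unfolding cspan_eq by blast
    moreover have "cvs.span F \<subseteq> cvs.span E0" using cvs.span_minimal[OF E0(3) cvs.subspace_span] .
    ultimately show ?thesis by blast
  qed
  define K where "K = {x. R x = 0}"
  define EP where "EP = {x::'a. \<forall>e\<in>E0. cinner e x = 0}"
  define Ma where "Ma = M \<inter> K"
  define M0 where "M0 = Ma \<inter> EP"
  define orth where "orth N = {x::'a. \<forall>n\<in>N. cinner n x = 0}" for N
  define M1 where "M1 = M \<inter> orth M0"
  have Ksub: "csubspace K" unfolding K_def by (rule csubspace_kernel[OF lin])
  have Kcl: "closed K" unfolding K_def using closed_Collect_eq[OF Rcont continuous_on_const] .
  have EPsub: "csubspace EP" unfolding EP_def by (rule csubspace_orth)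
  have EPcl: "closed EP" unfolding EP_def by (rule closed_orth)
  have orthsub: "csubspace (orth N)" for N unfolding orth_def by (rule csubspace_orth)
  have orthcl: "closed (orth N)" for N unfolding orth_def by (rule closed_orth)
  have Masub: "csubspace Ma" unfolding Ma_def by (rule csubspace_inter[OF Msub Ksub])
  have Macl: "closed Ma" unfolding Ma_def using Mcl Kcl by (rule closed_Int)
  have M0sub: "csubspace M0" unfolding M0_def by (rule csubspace_inter[OF Masub EPsub])
  have M0cl: "closed M0" unfolding M0_def using Macl EPcl by (rule closed_Int)
  have M1sub: "csubspace M1" unfolding M1_def by (rule csubspace_inter[OF Msub orthsub])
  have M1cl: "closed M1" unfolding M1_def using Mcl orthcl by (rule closed_Int)
  have M0M: "M0 \<subseteq> M" and M1M: "M1 \<subseteq> M" unfolding M0_def Ma_def M1_def by auto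

  have decomp: "\<exists>p\<in>M0. x - p \<in> M1" if "x \<in> M" for x
  proof -
    obtain p where p: "p \<in> M0" "\<forall>n\<in>M0. cinner n (x - p) = 0"
      using proj_exists[OF M0sub M0cl, of x] by blast
    have "x - p \<in> M" using csubspace_diff[OF Msub that] p(1) M0M by blast
    moreover have "x - p \<in> orth M0" using p(2) unfolding orth_def by blast
    ultimately show ?thesis using p(1) unfolding M1_def by blast
  qed

  have normT: "(norm (x + R x))\<^sup>2 = (norm p)\<^sup>2 + (norm ((x - p) + R (x - p)))\<^sup>2"
    and normx: "(norm x)\<^sup>2 = (norm p)\<^sup>2 + (norm (x - p))\<^sup>2"
    if pM0: "p \<in> M0" and xp: "x - p \<in> M1" for x p
  proof -
    have Rp: "R p = 0" using pM0 unfolding M0_def Ma_def K_def by blast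
    have Ep: "\<forall>e\<in>E0. cinner e p = 0" using pM0 unfolding M0_def EP_def by blast
    have op: "cinner p (x - p) = 0" using xp pM0 unfolding M1_def orth_def by blast
    have xe: "p + (x - p) = x" by simp
    show "(norm (x + R x))\<^sup>2 = (norm p)\<^sup>2 + (norm ((x - p) + R (x - p)))\<^sup>2"
      using decomp_norms[OF lin RE E0(1,2) Rp Ep op] unfolding xe .
    show "(norm x)\<^sup>2 = (norm p)\<^sup>2 + (norm (x - p))\<^sup>2"
      using pythag[OF op] unfolding xe .
  qed

  define W1 where "W1 = M \<inter> orth Ma"
  define W2 where "W2 = Ma \<inter> orth M0"
  define P where "P y = (\<Sum>e\<in>E0. cinner e y *\<^sub>C e)" for y
  have Plin: "clinear P"
    unfolding clinear_def P_def
    by (simp add: cinner_add_right cinner_scaleC_right scaleC_add_left sum.distrib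
        cvs.scale_sum_right scaleC_scaleC)
  have W1sub: "cvs.subspace W1" unfolding W1_def csubspace_iff[symmetric]
    by (rule csubspace_inter[OF Msub orthsub])
  have W2sub: "cvs.subspace W2" unfolding W2_def csubspace_iff[symmetric]
    by (rule csubspace_inter[OF Masub orthsub])
  obtain B1 where B1: "finite B1" "W1 \<subseteq> cvs.span B1"
  proof -
    have "\<exists>B. finite B \<and> W1 \<subseteq> cvs.span B"
    proof (rule fin_dim_inj[OF W1sub lin _ E0(1) RE])
      fix y assume y: "y \<in> W1" "R y = 0"
      then have "y \<in> Ma" unfolding W1_def Ma_def K_def by blast
      then have "cinner y y = 0" using y(1) unfolding W1_def orth_def by blast
      then show "y = 0" by (simp add: cinner_eq_zero_iff)
    qed
    then show ?thesis using that by blast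
  qed
  obtain B2 where B2: "finite B2" "W2 \<subseteq> cvs.span B2"
  proof -
    have "\<exists>B. finite B \<and> W2 \<subseteq> cvs.span B"
    proof (rule fin_dim_inj[OF W2sub Plin _ E0(1)])
      fix y assume y: "y \<in> W2" "P y = 0"
      have "cinner e y = 0" if "e \<in> E0" for e
      proof -
        have "cinner e (P y) = cinner e y" unfolding P_def by (rule ortho_coeff[OF E0(2,1) that])
        then show ?thesis using y(2) by simp
      qed
      then have "y \<in> M0" using y(1) unfolding W2_def M0_def EP_def by blast
      then have "cinner y y = 0" using y(1) unfolding W2_def orth_def by blast
      then show "y = 0" by (simp add: cinner_eq_zero_iff)
    next
      fix y show "P y \<in> cvs.span E0" unfolding P_def
        by (intro cvs.span_sum cvs.span_scale cvs.span_base)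
    qed
    then show ?thesis using that by blast
  qed
  have M1span: "M1 \<subseteq> cvs.span (B1 \<union> B2)"
  proof
    fix y assume y: "y \<in> M1"
    obtain a where a: "a \<in> Ma" "\<forall>n\<in>Ma. cinner n (y - a) = 0"
      using proj_exists[OF Masub Macl, of y] by blast
    have "y - a \<in> M" using csubspace_diff[OF Msub] y a(1) M1M unfolding Ma_def by blast
    then have ya: "y - a \<in> W1" using a(2) unfolding W1_def orth_def by blast
    have "cinner z a = 0" if z: "z \<in> M0" for z
    proof -
      have "cinner z y = 0" using y z unfolding M1_def orth_def by blast
      moreover have "cinner z (y - a) = 0" using a(2) z unfolding M0_def by blast
      ultimately show ?thesis by (simp add: cinner_diff_right)
    qed
    then have aW: "a \<in> W2" using a(1) unfolding W2_def orth_def by blast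
    have "a \<in> cvs.span (B1 \<union> B2)" using aW B2(2) cvs.span_mono[of B2 "B1 \<union> B2"] by blast
    moreover have "y - a \<in> cvs.span (B1 \<union> B2)" using ya B1(2) cvs.span_mono[of B1 "B1 \<union> B2"] by blast
    ultimately have "a + (y - a) \<in> cvs.span (B1 \<union> B2)" by (rule cvs.span_add)
    then show "y \<in> cvs.span (B1 \<union> B2)" by simp
  qed
  obtain Es where Es: "finite Es" "orthonormal Es" "B1 \<union> B2 \<subseteq> cvs.span Es"
    using gram_schmidt[of "B1 \<union> B2"] B1(1) B2(1) by blast
  have M1Es: "M1 \<subseteq> cvs.span Es"
    using M1span cvs.span_minimal[OF Es(3) cvs.subspace_span] by blast
  have Tcont: "continuous_on UNIV (\<lambda>z. norm (z + R z))"
    by (rule continuous_on_norm[OF continuous_on_add[OF continuous_on_id Rcont]])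

  have main: "\<exists>x0\<in>M. norm x0 = 1 \<and> (\<forall>x\<in>M. norm x = 1 \<longrightarrow> norm (x0 + R x0) \<le> norm (x + R x))"
  proof (cases "\<exists>v\<in>M1. norm v = 1")
    case True
    obtain ys where ys: "ys \<in> M1" "norm ys = 1" "\<forall>z\<in>M1. norm z = 1 \<longrightarrow> norm (ys + R ys) \<le> norm (z + R z)"
      using min_on_sphere[OF Es(1,2) M1Es M1cl True Tcont] by blast
    define mu where "mu = norm (ys + R ys)"
    have mu0: "mu \<ge> 0" unfolding mu_def by simp
    have scale: "mu * norm z \<le> norm (z + R z)" if z: "z \<in> M1" for z
    proof (cases "z = 0")
      case True then show ?thesis by simp
    next
      case False
      have "mu \<le> norm ((1 / norm z) *\<^sub>R z + R ((1 / norm z) *\<^sub>R z))"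
        unfolding mu_def using ys(3) normalize_in[OF M1sub z False] by blast
      also have "\<dots> = (1 / norm z) * norm (z + R z)" by (simp add: T_scale[OF lin])
      finally have "mu \<le> (1 / norm z) * norm (z + R z)" .
      then show ?thesis using False by (simp add: field_simps)
    qed
    have lower: "(norm p)\<^sup>2 + mu\<^sup>2 * (norm (x - p))\<^sup>2 \<le> (norm (x + R x))\<^sup>2"
      if "p \<in> M0" "x - p \<in> M1" for x p
    proof -
      have "mu * norm (x - p) \<le> norm ((x - p) + R (x - p))" by (rule scale[OF that(2)])
      then have "(mu * norm (x - p))\<^sup>2 \<le> (norm ((x - p) + R (x - p)))\<^sup>2"
        using mu0 by (intro power_mono) auto
      then show ?thesis using normT[OF that] by (simp add: power_mult_distrib)
    qed
    show ?thesis
    proof (cases "mu \<le> 1 \<or> M0 = {0}")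
      case True
      show ?thesis
      proof (intro bexI conjI ballI impI)
        show "ys \<in> M" using ys(1) M1M by blast
        show "norm ys = 1" by (rule ys(2))
        fix x assume x: "x \<in> M" "norm x = 1"
        obtain p where p: "p \<in> M0" "x - p \<in> M1" using decomp[OF x(1)] by blast
        have nx: "(norm p)\<^sup>2 + (norm (x - p))\<^sup>2 = 1" using normx[OF p] x(2) by simp
        have lo: "(norm p)\<^sup>2 + mu\<^sup>2 * (norm (x - p))\<^sup>2 \<le> (norm (x + R x))\<^sup>2" by (rule lower[OF p])
        have "mu\<^sup>2 \<le> (norm (x + R x))\<^sup>2"
          using True
        proof
          assume "mu \<le> 1"
          then have "mu\<^sup>2 \<le> 1" using mu0 by (simp add: power_le_one)
          then have "mu\<^sup>2 * (norm p)\<^sup>2 \<le> (norm p)\<^sup>2" by (simp add: mult_left_le_one_le)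
          moreover have "mu\<^sup>2 = mu\<^sup>2 * (norm p)\<^sup>2 + mu\<^sup>2 * (norm (x - p))\<^sup>2"
            using nx by (simp add: ring_distribs[symmetric])
          ultimately show ?thesis using lo by linarith
        next
          assume "M0 = {0}"
          then have "p = 0" using p(1) by blast
          then show ?thesis using lo nx by simp
        qed
        then show "norm (ys + R ys) \<le> norm (x + R x)"
          unfolding mu_def[symmetric] by (rule power2_le_imp_le) simp
      qed
    next
      case False
      then have mu1: "mu > 1" and "M0 \<noteq> {0}" by auto
      then obtain u where u: "u \<in> M0" "u \<noteq> 0" using csubspace_0[OF M0sub] by blast
      define x0 where "x0 = (1 / norm u) *\<^sub>R u"
      have x0M0: "x0 \<in> M0" and nx0: "norm x0 = 1" unfolding x0_def using normalize_in[OF M0sub u] by auto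
      have "R x0 = 0" using x0M0 unfolding M0_def Ma_def K_def by blast
      then have Tx0: "norm (x0 + R x0) = 1" using nx0 by simp
      show ?thesis
      proof (intro bexI conjI ballI impI)
        show "x0 \<in> M" using x0M0 M0M by blast
        show "norm x0 = 1" by (rule nx0)
        fix x assume x: "x \<in> M" "norm x = 1"
        obtain p where p: "p \<in> M0" "x - p \<in> M1" using decomp[OF x(1)] by blast
        have nx: "(norm p)\<^sup>2 + (norm (x - p))\<^sup>2 = 1" using normx[OF p] x(2) by simp
        have lo: "(norm p)\<^sup>2 + mu\<^sup>2 * (norm (x - p))\<^sup>2 \<le> (norm (x + R x))\<^sup>2" by (rule lower[OF p])
        have "1 \<le> mu\<^sup>2" using mu1 by (simp add: one_le_power)
        then have "(norm (x - p))\<^sup>2 \<le> mu\<^sup>2 * (norm (x - p))\<^sup>2" by (simp add: mult_le_cancel_right1)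
        then have "1 \<le> (norm (x + R x))\<^sup>2" using lo nx by linarith
        then have "1 \<le> norm (x + R x)" using power2_le_imp_le[of 1 "norm (x + R x)"] by simp
        then show "norm (x0 + R x0) \<le> norm (x + R x)" using Tx0 by simp
      qed
    qed
  next
    case False
    have M1z: "z = 0" if "z \<in> M1" for z
    proof (rule ccontr)
      assume "z \<noteq> 0"
      then show False using False normalize_in[OF M1sub that] by blast
    qed
    obtain v where v: "v \<in> M" "v \<noteq> 0" using Mne csubspace_0[OF Msub] by blast
    define x0 where "x0 = (1 / norm v) *\<^sub>R v"
    have x0M: "x0 \<in> M" and nx0: "norm x0 = 1" unfolding x0_def using normalize_in[OF Msub v] by auto
    have TM: "norm (x + R x) = norm x" if xM: "x \<in> M" for x
    proof -
      obtain p where p: "p \<in> M0" "x - p \<in> M1" using decomp[OF xM] by blast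
      then have "x = p" using M1z[OF p(2)] by simp
      then have "R x = 0" using p(1) unfolding M0_def Ma_def K_def by blast
      then show ?thesis by simp
    qed
    show ?thesis
    proof (intro bexI conjI ballI impI)
      show "x0 \<in> M" by (rule x0M)
      show "norm x0 = 1" by (rule nx0)
      fix x assume x: "x \<in> M" "norm x = 1"
      show "norm (x0 + R x0) \<le> norm (x + R x)" using TM[OF x0M] TM[OF x(1)] nx0 x(2) by simp
    qed
  qed
  then obtain x0 where x0: "x0 \<in> M" "norm x0 = 1"
    "\<forall>x\<in>M. norm x = 1 \<longrightarrow> norm (x0 + R x0) \<le> norm (x + R x)" by blast
  have "Inf {norm (x + R x) |x. x \<in> M \<and> norm x = 1} = norm (x0 + R x0)"
    by (rule cInf_eq_minimum) (use x0 in auto)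
  then show "restr_attains_min (\<lambda>x. x + R x) M"
    unfolding restr_attains_min_def min_mod_def using x0(1,2) by auto
qed

end
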